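(* For a locally convex space $E$ consider the properties: (1) $E$ has an $\omega^\omega$-base; (2) $E$ has a countable $\mathsf s^*$-network at zero; (3) $E$ has a countable $\mathsf{cs}^*$-network at zero; (4) $E$ has a countable $\mathsf{cs}^\bullet$-network at zero; (5) $E$ has a countable radial network; (6) each uncountable subset of $E$ contains an infinite bounded subset; (7) $E$ contains an infinite-dimensional compact set. Then $(1)\Rightarrow(2)\Rightarrow(3)\Rightarrow(4)\Rightarrow(5)\Rightarrow(6)$. If moreover $E$ has an uncountable Hamel basis, then $(6)\Rightarrow(7)$.
   Context: $E$ has an $\omega^\omega$-base if there is a neighborhood base $(U_\alpha)_{\alpha\in\omega^\omega}$ at zero with $U_\beta\subseteq U_\alpha$ whenever $\alpha\le\beta$ pointwise. A sequence $(x_n)$ accumulates at $x$ if every neighborhood of $x$ contains $x_n$ for infinitely many $n$. A family $\mathcal N$ of subsets of $E$ is: an $\mathsf s^*$-network at $x$ if for every neighborhood $O_x$ of $x$ and every sequence $(x_n)$ accumulating at $x$ there is $N\in\mathcal N$ with $N\subseteq O_x$ and $\{n:x_n\in N\}$ infinite; a $\mathsf{cs}^*$-network at $x$ if the same holds for every sequence converging to $x$; a $\mathsf{cs}^\bullet$-network at $x$ if for every neighborhood $O_x$ of $x$ and every sequence $(x_n)$ converging to $x$ there is $N\in\mathcal N$ with $N\subseteq O_x$ containing some $x_n$. A radial network is a family $\mathcal N$ of subsets of $E$ such that for every neighborhood $U$ of zero and every $x\in E$ there are $N\in\mathcal N$ and a nonzero real $\varepsilon$ with $\varepsilon x\in N\subseteq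 U$. Bounded: $B\subseteq nU$ for some $n$, for every neighborhood $U$ of zero. An infinite-dimensional compact set is one of infinite topological dimension (equivalently, not contained in a finite-dimensional subspace). *)

theory Defs
  imports "HOL-Analysis.Analysis"
begin

definition nhd :: "'a::topological_space \<Rightarrow> 'a set \<Rightarrow> bool" where
  "nhd x N \<longleftrightarrow> (\<exists>W. open W \<and> x \<in> W \<and> W \<subseteq> N)"

definition locally_convex_space :: "'a::{real_vector,t2_space} itself \<Rightarrow> bool" where
  "locally_convex_space _ \<longleftrightarrow>
     continuous_on UNIV (\<lambda>p::'a \<times> 'a. fst p + snd p) \<and>
     continuous_on UNIV (\<lambda>p::real \<times> 'a. fst p *\<^sub>R snd p) \<and>
     (\<forall>U::'a set. nhd 0 U \<longrightarrow> (\<exists>V. open V \<and> convex V \<and> 0 \<in> V \<and> V \<subseteq> U))"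

definition has_ww_base :: "'a::{real_vector,topological_space} itself \<Rightarrow> bool" where
  "has_ww_base _ \<longleftrightarrow> (\<exists>U :: (nat \<Rightarrow> nat) \<Rightarrow> 'a set.
      (\<forall>\<alpha>. nhd 0 (U \<alpha>)) \<and> (\<forall>N. nhd 0 N \<longrightarrow> (\<exists>\<alpha>. U \<alpha> \<subseteq> N)) \<and>
      (\<forall>\<alpha> \<beta>. \<alpha> \<le> \<beta> \<longrightarrow> U \<beta> \<subseteq> U \<alpha>))"

definition accumulates :: "(nat \<Rightarrow> 'a::topological_space) \<Rightarrow> 'a \<Rightarrow> bool" where
  "accumulates s x \<longleftrightarrow> (\<forall>W. nhd x W \<longrightarrow> infinite {n. s n \<in> W})"

definition s_star_network_at :: "'a::topological_space set set \<Rightarrow> 'a \<Rightarrow> bool" where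
  "s_star_network_at \<N> x \<longleftrightarrow> (\<forall>W s. nhd x W \<and> accumulates s x \<longrightarrow>
      (\<exists>N\<in>\<N>. N \<subseteq> W \<and> infinite {n. s n \<in> N}))"

definition cs_star_network_at :: "'a::topological_space set set \<Rightarrow> 'a \<Rightarrow> bool" where
  "cs_star_network_at \<N> x \<longleftrightarrow> (\<forall>W s. nhd x W \<and> s \<longlonglongrightarrow> x \<longrightarrow>
      (\<exists>N\<in>\<N>. N \<subseteq> W \<and> infinite {n. s n \<in> N}))"

definition cs_bullet_network_at :: "'a::topological_space set set \<Rightarrow> 'a \<Rightarrow> bool" where
  "cs_bullet_network_at \<N> x \<longleftrightarrow> (\<forall>W s. nhd x W \<and> s \<longlonglongrightarrow> x \<longrightarrow>
      (\<exists>N\<in>\<N>. N \<subseteq> W \<and> (\<exists>n. s n \<in> N)))"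

definition radial_network :: "'a::{real_vector,topological_space} set set \<Rightarrow> bool" where
  "radial_network \<N> \<longleftrightarrow> (\<forall>U x. nhd 0 U \<longrightarrow>
      (\<exists>N\<in>\<N>. \<exists>\<epsilon>::real. \<epsilon> \<noteq> 0 \<and> \<epsilon> *\<^sub>R x \<in> N \<and> N \<subseteq> U))"

definition tvs_bounded :: "'a::{real_vector,topological_space} set \<Rightarrow> bool" where
  "tvs_bounded B \<longleftrightarrow> (\<forall>U. nhd 0 U \<longrightarrow> (\<exists>n::nat. B \<subseteq> (\<lambda>x. real n *\<^sub>R x) ` U))"

end

theory Submission
  imports Defs
begin
lemma nhdE: assumes "nhd x W" obtains V where "open V" "x \<in> V" "V \<subseteq> W"
  using assms unfolding nhd_def by blast

lemma open_nhd: "open V \<Longrightarrow> x \<in> V \<Longrightarrow> nhd x V"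
  unfolding nhd_def by blast

lemma scale_seq:
  fixes x :: "'a::{real_vector,t2_space}"
  assumes cont: "continuous_on UNIV (\<lambda>p::real\<times>'a. fst p *\<^sub>R snd p)"
  shows "(\<lambda>n. inverse (real (Suc n)) *\<^sub>R x) \<longlonglongrightarrow> 0"
proof -
  have "isCont (\<lambda>p::real\<times>'a. fst p *\<^sub>R snd p) (0, x)"
    using cont continuous_on_eq_continuous_at open_UNIV by blast
  moreover have "(\<lambda>n. (inverse (real (Suc n)), x)) \<longlonglongrightarrow> (0, x)"
    by (intro tendsto_Pair LIMSEQ_inverse_real_of_nat tendsto_const)
  ultimately have "(\<lambda>n. (\<lambda>p::real\<times>'a. fst p *\<^sub>R snd p) (inverse (real (Suc n)), x))
     \<longlonglongrightarrow> (\<lambda>p::real\<times>'a. fst p *\<^sub>R snd p) (0, x)"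
    by (rule isCont_tendsto_compose)
  then show ?thesis by simp
qed

definition balanced :: "'a::real_vector set \<Rightarrow> bool" where
  "balanced W \<longleftrightarrow> (\<forall>t w. \<bar>t\<bar> \<le> 1 \<longrightarrow> w \<in> W \<longrightarrow> t *\<^sub>R w \<in> W)"

lemma balanced_nhd:
  fixes E :: "'a::{real_vector,t2_space} itself"
  assumes lcs: "locally_convex_space E" and U: "nhd (0::'a) U"
  shows "\<exists>W. nhd 0 W \<and> W \<subseteq> U \<and> balanced W"
proof -
  obtain V :: "'a set" where V: "open V" "convex V" "0 \<in> V" "V \<subseteq> U"
    using lcs U unfolding locally_convex_space_def by blast
  have cont: "continuous_on UNIV (\<lambda>p::real\<times>'a. fst p *\<^sub>R snd p)"
    using lcs unfolding locally_convex_space_def by blast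
  have "continuous_on UNIV ((\<lambda>p::real\<times>'a. fst p *\<^sub>R snd p) \<circ> (\<lambda>x::'a. (-1::real, x)))"
    by (rule continuous_on_compose) (auto intro!: continuous_intros intro: continuous_on_subset[OF cont])
  then have cneg: "continuous_on UNIV (\<lambda>x::'a. (-1::real) *\<^sub>R x)" by (simp add: o_def)
  define W where "W = V \<inter> (\<lambda>x::'a. (-1::real) *\<^sub>R x) -` V"
  have "open W" unfolding W_def using V(1) cneg by (intro open_Int open_vimage)
  moreover have "0 \<in> W" using V(3) by (simp add: W_def)
  moreover have "W \<subseteq> U" using V(4) by (auto simp: W_def)
  moreover have "balanced W" unfolding balanced_def
  proof (intro allI impI)
    fix t :: real and w assume t: "\<bar>t\<bar> \<le> 1" and w: "w \<in> W"
    then have w1: "w \<in> V" and w2: "- w \<in> V" by (auto simp: W_def)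
    have "((1+t)/2) *\<^sub>R w + ((1-t)/2) *\<^sub>R (-w) \<in> V"
      using V(2) w1 w2 t unfolding convex_def by (auto simp: field_simps)
    moreover have "((1+t)/2) *\<^sub>R w + ((1-t)/2) *\<^sub>R (-w) = t *\<^sub>R w"
    proof -
      have "((1+t)/2) *\<^sub>R w + ((1-t)/2) *\<^sub>R (-w) = ((1+t)/2 - (1-t)/2) *\<^sub>R w"
        by (simp add: scaleR_diff_left)
      also have "(1+t)/2 - (1-t)/2 = t" by (simp add: field_simps)
      finally show ?thesis .
    qed
    moreover have "((1+t)/2) *\<^sub>R (-w) + ((1-t)/2) *\<^sub>R w \<in> V"
      using V(2) w1 w2 t unfolding convex_def by (auto simp: field_simps)
    moreover have "((1+t)/2) *\<^sub>R (-w) + ((1-t)/2) *\<^sub>R w = - (t *\<^sub>R w)"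
    proof -
      have "((1+t)/2) *\<^sub>R (-w) + ((1-t)/2) *\<^sub>R w = ((1-t)/2 - (1+t)/2) *\<^sub>R w"
        by (simp add: scaleR_diff_left)
      also have "(1-t)/2 - (1+t)/2 = -t" by (simp add: field_simps)
      finally show ?thesis by simp
    qed
    ultimately show "t *\<^sub>R w \<in> W" by (simp add: W_def)
  qed
  ultimately show ?thesis using open_nhd by blast
qed


definition absorbs :: "'a::real_vector set \<Rightarrow> 'a set \<Rightarrow> bool" where
  "absorbs W B \<longleftrightarrow> (\<exists>n::nat. n \<ge> 1 \<and> B \<subseteq> (\<lambda>y. real n *\<^sub>R y) ` W)"

lemma balanced_mono:
  assumes "balanced W" "1 \<le> n" "n \<le> m" "x \<in> (\<lambda>y. real n *\<^sub>R y) ` W"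
  shows "x \<in> (\<lambda>y. real m *\<^sub>R y) ` W"
proof -
  obtain w where w: "w \<in> W" "x = real n *\<^sub>R w" using assms(4) by blast
  have "\<bar>real n / real m\<bar> \<le> 1" using assms(2,3) by auto
  then have "(real n / real m) *\<^sub>R w \<in> W" using assms(1) w(1) unfolding balanced_def by blast
  moreover have "x = real m *\<^sub>R ((real n / real m) *\<^sub>R w)" using assms(2,3) w(2) by simp
  ultimately show ?thesis by blast
qed

lemma absorbs_Un:
  assumes "balanced W" "absorbs W A" "absorbs W B" shows "absorbs W (A \<union> B)"
proof -
  obtain n m where n: "n \<ge> 1" "A \<subseteq> (\<lambda>y. real n *\<^sub>R y) ` W"
    and m: "m \<ge> 1" "B \<subseteq> (\<lambda>y. real m *\<^sub>R y) ` W"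
    using assms unfolding absorbs_def by blast
  have "A \<union> B \<subseteq> (\<lambda>y. real (max n m) *\<^sub>R y) ` W"
    using balanced_mono[OF assms(1) n(1), of "max n m"] balanced_mono[OF assms(1) m(1), of "max n m"] n m
    by auto
  then show ?thesis unfolding absorbs_def using n(1) by (intro exI[of _ "max n m"]) auto
qed

lemma absorbs_subset: "absorbs W B \<Longrightarrow> A \<subseteq> B \<Longrightarrow> absorbs W A"
  unfolding absorbs_def by blast

lemma absorbs_point:
  fixes x :: "'a::{real_vector,t2_space}"
  assumes cont: "continuous_on UNIV (\<lambda>p::real\<times>'a. fst p *\<^sub>R snd p)" and W: "nhd 0 W"
  shows "absorbs W {x}"
proof -
  obtain V where V: "open V" "0 \<in> V" "V \<subseteq> W" using W by (rule nhdE)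
  have "eventually (\<lambda>n. inverse (real (Suc n)) *\<^sub>R x \<in> V) sequentially"
    using scale_seq[OF cont, of x] V(1,2) by (rule topological_tendstoD)
  then obtain n where "inverse (real (Suc n)) *\<^sub>R x \<in> V" by (meson eventually_sequentially order.refl)
  then have "inverse (real (Suc n)) *\<^sub>R x \<in> W" using V(3) by blast
  moreover have "x = real (Suc n) *\<^sub>R (inverse (real (Suc n)) *\<^sub>R x)" by simp
  ultimately have "x \<in> (\<lambda>y. real (Suc n) *\<^sub>R y) ` W" by (rule rev_image_eqI)
  then show ?thesis unfolding absorbs_def by (intro exI[of _ "Suc n"]) auto
qed

lemma absorbs_finite:
  fixes F :: "'a::{real_vector,t2_space} set"
  assumes cont: "continuous_on UNIV (\<lambda>p::real\<times>'a. fst p *\<^sub>R snd p)" and W: "nhd 0 W"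
    and bal: "balanced W" and fin: "finite F"
  shows "absorbs W F"
  using fin
proof (induction F rule: finite_induct)
  case empty
  then show ?case unfolding absorbs_def by (intro exI[of _ 1]) auto
next
  case (insert x F)
  then show ?case using absorbs_Un[OF bal absorbs_point[OF cont W, of x]] by simp
qed

lemma ww_s_star:
  fixes U :: "(nat \<Rightarrow> nat) \<Rightarrow> 'a::topological_space set"
  assumes nh: "\<forall>\<alpha>. nhd x0 (U \<alpha>)" and base: "\<forall>N. nhd x0 N \<longrightarrow> (\<exists>\<alpha>. U \<alpha> \<subseteq> N)"
    and mono: "\<forall>\<alpha> \<beta>. \<alpha> \<le> \<beta> \<longrightarrow> U \<beta> \<subseteq> U \<alpha>"
  shows "\<exists>\<N>. countable \<N> \<and> s_star_network_at \<N> x0"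
proof -
  define M where "M l = \<Inter>{U \<alpha> | \<alpha>. \<forall>i<length l. \<alpha> i = l!i}" for l :: "nat list"
  have "countable (range M)" by simp
  moreover have "s_star_network_at (range M) x0"
    unfolding s_star_network_at_def
  proof (intro allI impI, elim conjE)
    fix W s assume W: "nhd x0 W" and acc: "accumulates s x0"
    obtain \<alpha> where \<alpha>: "U \<alpha> \<subseteq> W" using base W by blast
    define P where "P n = map \<alpha> [0..<n]" for n
    have lenP: "length (P n) = n" for n by (simp add: P_def)
    have nthP: "i < n \<Longrightarrow> P n ! i = \<alpha> i" for i n by (simp add: P_def)
    have Msub: "M (P n) \<subseteq> U \<alpha>" for n
      unfolding M_def by (rule Inter_lower) (auto simp: lenP nthP)
    show "\<exists>N\<in>range M. N \<subseteq> W \<and> infinite {n. s n \<in> N}"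
    proof (rule ccontr)
      assume neg: "\<not> ?thesis"
      have fin: "finite {k. s k \<in> M (P n)}" for n
      proof (rule ccontr)
        assume "infinite {k. s k \<in> M (P n)}"
        moreover have "M (P n) \<in> range M" "M (P n) \<subseteq> W" using Msub \<alpha> by auto
        ultimately show False using neg by blast
      qed
      define L where "L k = {n. s k \<notin> M (P n)}" for k
      define K where "K = {k. 0 \<in> L k}"
      define nk where "nk k = Max {n. n \<le> k \<and> n \<in> L k}" for k
      have nk: "nk k \<in> L k \<and> nk k \<le> k \<and> (\<forall>n. n \<le> k \<longrightarrow> n \<in> L k \<longrightarrow> n \<le> nk k)"
        if "k \<in> K" for k
      proof -
        have f: "finite {n. n \<le> k \<and> n \<in> L k}" by simp
        have ne: "0 \<in> {n. n \<le> k \<and> n \<in> L k}" using that by (simp add: K_def)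
        have "Max {n. n \<le> k \<and> n \<in> L k} \<in> {n. n \<le> k \<and> n \<in> L k}"
          using ne by (intro Max_in[OF f]) auto
        moreover have "\<forall>n. n \<le> k \<longrightarrow> n \<in> L k \<longrightarrow> n \<le> Max {n. n \<le> k \<and> n \<in> L k}"
          using Max_ge[OF f] by simp
        ultimately show ?thesis unfolding nk_def by simp
      qed
      have "\<forall>k\<in>K. \<exists>\<beta>. (\<forall>i<nk k. \<beta> i = \<alpha> i) \<and> s k \<notin> U \<beta>"
      proof
        fix k assume "k \<in> K"
        then have "s k \<notin> M (P (nk k))" using nk[of k] unfolding L_def by simp
        then obtain \<beta> where "\<forall>i<length (P (nk k)). \<beta> i = P (nk k) ! i" "s k \<notin> U \<beta>"
          unfolding M_def by auto
        then show "\<exists>\<beta>. (\<forall>i<nk k. \<beta> i = \<alpha> i) \<and> s k \<notin> U \<beta>"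
          using lenP nthP by auto
      qed
      then obtain \<beta> where \<beta>: "\<And>k. k \<in> K \<Longrightarrow> (\<forall>i<nk k. \<beta> k i = \<alpha> i) \<and> s k \<notin> U (\<beta> k)"
        by metis
      have finK: "finite {k\<in>K. nk k \<le> i}" for i
      proof -
        have "{k\<in>K. nk k \<le> i} \<subseteq> {..i} \<union> {k. s k \<in> M (P (Suc i))}"
        proof
          fix k assume k: "k \<in> {k\<in>K. nk k \<le> i}"
          show "k \<in> {..i} \<union> {k. s k \<in> M (P (Suc i))}"
          proof (cases "k \<le> i")
            case False
            have "Suc i \<le> k" using False by simp
            then have "Suc i \<notin> L k" using nk[of k] k by auto
            then show ?thesis by (simp add: L_def)
          qed simp
        qed
        then show ?thesis using fin[of "Suc i"] by (meson finite_Un finite_atMost finite_subset)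
      qed
      define \<gamma> where "\<gamma> i = max (\<alpha> i) (Max ((\<lambda>k. \<beta> k i) ` {k\<in>K. nk k \<le> i}))" for i
      have ge: "\<beta> k \<le> \<gamma>" if "k \<in> K" for k
      proof (rule le_funI)
        fix i show "\<beta> k i \<le> \<gamma> i"
        proof (cases "nk k \<le> i")
          case True
          then have "\<beta> k i \<le> Max ((\<lambda>k. \<beta> k i) ` {k\<in>K. nk k \<le> i})"
            using finK[of i] that by (intro Max_ge) auto
          then show ?thesis unfolding \<gamma>_def by linarith
        next
          case False
          then show ?thesis using \<beta>[OF that] unfolding \<gamma>_def by auto
        qed
      qed
      have "{k. s k \<in> U \<gamma>} \<subseteq> {k. s k \<in> M (P 0)}"
      proof
        fix k assume k: "k \<in> {k. s k \<in> U \<gamma>}"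
        show "k \<in> {k. s k \<in> M (P 0)}"
        proof (rule ccontr)
          assume "k \<notin> {k. s k \<in> M (P 0)}"
          then have "k \<in> K" by (simp add: K_def L_def)
          then have "U \<gamma> \<subseteq> U (\<beta> k)" using ge[of k] mono by blast
          then show False using \<beta>[of k] \<open>k \<in> K\<close> k by auto
        qed
      qed
      then have "finite {k. s k \<in> U \<gamma>}" using fin[of 0] by (rule finite_subset)
      moreover have "infinite {k. s k \<in> U \<gamma>}" using acc nh unfolding accumulates_def by simp
      ultimately show False by blast
    qed
  qed
  ultimately show ?thesis by blast
qed

primrec pick_seq :: "(nat \<Rightarrow> 'a set) \<Rightarrow> nat \<Rightarrow> 'a list" where
  "pick_seq P 0 = []"
| "pick_seq P (Suc i) = pick_seq P i @ [SOME y. y \<in> P i \<and> y \<notin> set (pick_seq P i)]"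

lemma inj_choice:
  fixes P :: "nat \<Rightarrow> 'a set"
  assumes inf: "\<And>i. infinite (P i)"
  shows "\<exists>x. inj x \<and> (\<forall>i. x i \<in> P i)"
proof -
  define x where "x i = (SOME y. y \<in> P i \<and> y \<notin> set (pick_seq P i))" for i
  have len: "length (pick_seq P i) = i" for i by (induction i) auto
  have nth: "j < i \<Longrightarrow> pick_seq P i ! j = x j" for i j
  proof (induction i)
    case (Suc i)
    then show ?case by (cases "j = i") (auto simp: nth_append len x_def)
  qed simp
  have ex: "\<exists>y. y \<in> P i \<and> y \<notin> set (pick_seq P i)" for i
  proof (rule ccontr)
    assume "\<not> (\<exists>y. y \<in> P i \<and> y \<notin> set (pick_seq P i))"
    then have "P i \<subseteq> set (pick_seq P i)" by blast
    then show False using inf[of i] finite_subset by blast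
  qed
  have xi: "x i \<in> P i \<and> x i \<notin> set (pick_seq P i)" for i
    unfolding x_def by (rule someI_ex[OF ex])
  have "x j \<noteq> x i" if "j < i" for i j
  proof -
    have "x j \<in> set (pick_seq P i)" using nth[OF that] len that by (metis nth_mem)
    then show ?thesis using xi[of i] by metis
  qed
  then have neq: "i \<noteq> j \<Longrightarrow> x i \<noteq> x j" for i j by (metis linorder_neqE_nat)
  have "inj x" by (rule injI) (use neq in blast)
  then show ?thesis using xi by blast
qed

lemma radial_bounded:
  fixes E :: "'a::{real_vector,t2_space} itself" and \<N> :: "'a set set" and A :: "'a set"
  assumes lcs: "locally_convex_space E" and cN: "countable \<N>" and rad: "radial_network \<N>"
    and A: "uncountable A"
  shows "\<exists>B\<subseteq>A. infinite B \<and> tvs_bounded B"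
proof -
  have cont: "continuous_on UNIV (\<lambda>p::real\<times>'a. fst p *\<^sub>R snd p)"
    using lcs unfolding locally_convex_space_def by blast
  define I where "I = \<N> \<times> (UNIV::nat set)"
  define S where "S q = {x. \<exists>t n. \<bar>t\<bar> \<le> real (snd q) \<and> n \<in> fst q \<and> x = t *\<^sub>R n}" for q :: "'a set \<times> nat"
  define T where "T Q = A \<inter> \<Inter>(S ` Q)" for Q
  define FS where "FS = {Q. finite Q \<and> Q \<subseteq> I}"
  define Bad where "Bad = \<Union>(T ` {Q\<in>FS. countable (T Q)})"
  have cI: "countable I" using cN by (simp add: I_def)
  have "countable Bad" unfolding Bad_def FS_def
    using countable_Collect_finite_subset[OF cI]
    by (intro countable_UN) (auto elim: countable_subset[rotated])
  have "A - Bad \<noteq> {}"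
  proof
    assume "A - Bad = {}"
    then have "A \<subseteq> Bad" by blast
    then show False using A \<open>countable Bad\<close> countable_subset by blast
  qed
  then obtain xs where xs: "xs \<in> A" "xs \<notin> Bad" by blast
  have "nhd (0::'a) UNIV" unfolding nhd_def by blast
  then have "\<N> \<noteq> {}" using rad unfolding radial_network_def by blast
  then have "I \<noteq> {}" by (simp add: I_def)
  define e where "e = from_nat_into I"
  have re: "range e = I" unfolding e_def using range_from_nat_into[OF \<open>I \<noteq> {}\<close> cI] .
  define Q where "Q i = e ` {j. j \<le> i \<and> xs \<in> S (e j)}" for i
  have QFS: "Q i \<in> FS" for i unfolding Q_def FS_def using re by auto
  have xsT: "xs \<in> T (Q i)" for i unfolding T_def Q_def using xs(1) by auto
  have "uncountable (T (Q i))" for i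
    using xsT[of i] xs(2) QFS[of i] unfolding Bad_def by blast
  then have "infinite (T (Q i))" for i using countable_finite by blast
  then obtain x where x: "inj x" "\<And>i. x i \<in> T (Q i)" using inj_choice[of "\<lambda>i. T (Q i)"] by blast
  have "range x \<subseteq> A" using x(2) unfolding T_def by blast
  moreover have "infinite (range x)" using x(1) by (simp add: range_inj_infinite)
  moreover have "tvs_bounded (range x)"
    unfolding tvs_bounded_def
  proof (intro allI impI)
    fix U :: "'a set" assume U: "nhd 0 U"
    obtain W where W: "nhd 0 W" "W \<subseteq> U" "balanced W" using balanced_nhd[OF lcs U] by blast
    obtain N \<epsilon> where N: "N \<in> \<N>" "\<epsilon> \<noteq> 0" "\<epsilon> *\<^sub>R xs \<in> N" "N \<subseteq> W"
      using rad W(1) unfolding radial_network_def by blast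
    define m where "m = nat \<lceil>\<bar>inverse \<epsilon>\<bar>\<rceil>"
    have "(N, m) \<in> I" using N(1) by (simp add: I_def)
    then obtain j where j: "e j = (N, m)" using re by (metis rangeE)
    have m1: "\<bar>inverse \<epsilon>\<bar> \<le> real m" unfolding m_def by (rule real_nat_ceiling_ge)
    have m2: "xs = inverse \<epsilon> *\<^sub>R (\<epsilon> *\<^sub>R xs)" using N(2) by simp
    have xsS: "xs \<in> S (N, m)" unfolding S_def using m1 m2 N(3) by (simp only: fst_conv snd_conv mem_Collect_eq) blast
    have NQ: "(N, m) \<in> Q i" if "i \<ge> j" for i unfolding Q_def using j that xsS
      by (intro image_eqI[of _ _ j]) auto
    have xiS: "x i \<in> S (N, m)" if "i \<ge> j" for i
    proof -
      have "x i \<in> \<Inter>(S ` Q i)" using x(2)[of i] unfolding T_def by simp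
      then show ?thesis using NQ[OF that] by blast
    qed
    have SW: "S (N, m) \<subseteq> (\<lambda>y. real (Suc m) *\<^sub>R y) ` W"
    proof
      fix z assume "z \<in> S (N, m)"
      then obtain t n where tn: "\<bar>t\<bar> \<le> real m" "n \<in> N" "z = t *\<^sub>R n" unfolding S_def by auto
      have "\<bar>t / real (Suc m)\<bar> \<le> 1" using tn(1) by (simp add: divide_le_eq_1)
      then have "(t / real (Suc m)) *\<^sub>R n \<in> W" using W(3) tn(2) N(4) unfolding balanced_def by blast
      moreover have "z = real (Suc m) *\<^sub>R ((t / real (Suc m)) *\<^sub>R n)" using tn(3) by simp
      ultimately show "z \<in> (\<lambda>y. real (Suc m) *\<^sub>R y) ` W" by (rule rev_image_eqI)
    qed
    have "x ` {j..} \<subseteq> S (N, m)" using xiS by auto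
    then have "x ` {j..} \<subseteq> (\<lambda>y. real (Suc m) *\<^sub>R y) ` W" using SW by (rule subset_trans)
    then have "absorbs W (x ` {j..})" unfolding absorbs_def by (intro exI[of _ "Suc m"]) simp
    moreover have "absorbs W (x ` {..<j})" by (rule absorbs_finite[OF cont W(1) W(3)]) simp
    ultimately have "absorbs W (x ` {j..} \<union> x ` {..<j})" using absorbs_Un W(3) by blast
    moreover have "range x = x ` {j..} \<union> x ` {..<j}"
    proof -
      have "(UNIV::nat set) = {j..} \<union> {..<j}" by auto
      then show ?thesis by (metis image_Un)
    qed
    ultimately obtain n where "range x \<subseteq> (\<lambda>y. real n *\<^sub>R y) ` W" unfolding absorbs_def by auto
    moreover have "(\<lambda>y. real n *\<^sub>R y) ` W \<subseteq> (\<lambda>y. real n *\<^sub>R y) ` U" by (rule image_mono[OF W(2)])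
    ultimately show "\<exists>n. range x \<subseteq> (\<lambda>y. real n *\<^sub>R y) ` U" by (meson subset_trans)
  qed
  ultimately show ?thesis by blast
qed


lemma conv_acc:
  fixes s :: "nat \<Rightarrow> 'a::topological_space"
  assumes "s \<longlonglongrightarrow> x" shows "accumulates s x"
  unfolding accumulates_def
proof (intro allI impI)
  fix W assume "nhd x W"
  then obtain V where V: "open V" "x \<in> V" "V \<subseteq> W" by (rule nhdE)
  have "eventually (\<lambda>n. s n \<in> V) sequentially" using assms V(1,2) by (rule topological_tendstoD)
  then obtain N where N: "\<And>n. n \<ge> N \<Longrightarrow> s n \<in> V" by (auto simp: eventually_sequentially)
  have sub: "{N..} \<subseteq> {n. s n \<in> W}" using N V(3) by auto
  show "infinite {n. s n \<in> W}"
  proof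
    assume "finite {n. s n \<in> W}"
    then have "finite {N..}" using sub by (rule finite_subset[rotated])
    then show False using infinite_Ici[of N] by auto
  qed
qed

theorem theorem5p2:
  fixes E :: "'a::{real_vector,t2_space} itself"
  assumes lcs: "locally_convex_space E"
  defines "P1 \<equiv> has_ww_base E"
      and "P2 \<equiv> (\<exists>\<N>::'a set set. countable \<N> \<and> s_star_network_at \<N> 0)"
      and "P3 \<equiv> (\<exists>\<N>::'a set set. countable \<N> \<and> cs_star_network_at \<N> 0)"
      and "P4 \<equiv> (\<exists>\<N>::'a set set. countable \<N> \<and> cs_bullet_network_at \<N> 0)"
      and "P5 \<equiv> (\<exists>\<N>::'a set set. countable \<N> \<and> radial_network \<N>)"
      and "P6 \<equiv> (\<forall>A::'a set. uncountable A \<longrightarrow> (\<exists>B\<subseteq>A. infinite B \<and> tvs_bounded B))"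
      and "P7 \<equiv> (\<exists>K::'a set. compact K \<and> \<not> (\<exists>F. finite F \<and> K \<subseteq> span F))"
  shows "(P1 \<longrightarrow> P2) \<and> (P2 \<longrightarrow> P3) \<and> (P3 \<longrightarrow> P4) \<and> (P4 \<longrightarrow> P5) \<and> (P5 \<longrightarrow> P6) \<and>
         ((\<exists>B::'a set. independent B \<and> span B = UNIV \<and> uncountable B) \<longrightarrow> (P6 \<longrightarrow> P7))"
proof (intro conjI impI)
  have cont: "continuous_on UNIV (\<lambda>p::real\<times>'a. fst p *\<^sub>R snd p)"
    using lcs[unfolded locally_convex_space_def] by (rule conjunct1[OF conjunct2])
  show "P1 \<Longrightarrow> P2"
  proof -
    assume P1
    then obtain U :: "(nat \<Rightarrow> nat) \<Rightarrow> 'a set" where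
      U: "(\<forall>\<alpha>. nhd 0 (U \<alpha>)) \<and> (\<forall>N. nhd 0 N \<longrightarrow> (\<exists>\<alpha>. U \<alpha> \<subseteq> N)) \<and> (\<forall>\<alpha> \<beta>. \<alpha> \<le> \<beta> \<longrightarrow> U \<beta> \<subseteq> U \<alpha>)"
      unfolding P1_def has_ww_base_def by (rule exE)
    have U1: "\<forall>\<alpha>. nhd 0 (U \<alpha>)" using U by (rule conjunct1)
    have U2: "\<forall>N. nhd 0 N \<longrightarrow> (\<exists>\<alpha>. U \<alpha> \<subseteq> N)" using U by (rule conjunct1[OF conjunct2])
    have U3: "\<forall>\<alpha> \<beta>. \<alpha> \<le> \<beta> \<longrightarrow> U \<beta> \<subseteq> U \<alpha>" using U by (rule conjunct2[OF conjunct2])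
    show P2 unfolding P2_def by (rule ww_s_star[OF U1 U2 U3])
  qed
  show "P2 \<Longrightarrow> P3"
  proof -
    assume P2
    then obtain \<N> :: "'a set set" where N: "countable \<N>" "s_star_network_at \<N> 0"
      unfolding P2_def by blast
    have "cs_star_network_at \<N> 0" unfolding cs_star_network_at_def
    proof (intro allI impI, elim conjE)
      fix W and s :: "nat \<Rightarrow> 'a" assume "nhd (0::'a) W" "s \<longlonglongrightarrow> 0"
      then show "\<exists>N\<in>\<N>. N \<subseteq> W \<and> infinite {n. s n \<in> N}"
        using N(2) conv_acc[of s 0] unfolding s_star_network_at_def by simp
    qed
    then show P3 unfolding P3_def using N(1) by blast
  qed
  show "P3 \<Longrightarrow> P4"
  proof -
    assume P3
    then obtain \<N> :: "'a set set" where N: "countable \<N>" "cs_star_network_at \<N> 0"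
      unfolding P3_def by blast
    have "cs_bullet_network_at \<N> 0" unfolding cs_bullet_network_at_def
    proof (intro allI impI, elim conjE)
      fix W and s :: "nat \<Rightarrow> 'a" assume "nhd (0::'a) W" "s \<longlonglongrightarrow> 0"
      then obtain N where "N \<in> \<N>" "N \<subseteq> W" "infinite {n. s n \<in> N}"
        using N(2) unfolding cs_star_network_at_def by blast
      moreover from this(3) have "{n. s n \<in> N} \<noteq> {}" by (metis finite.emptyI)
      ultimately show "\<exists>N\<in>\<N>. N \<subseteq> W \<and> (\<exists>n. s n \<in> N)" by blast
    qed
    then show P4 unfolding P4_def using N(1) by blast
  qed
  show "P4 \<Longrightarrow> P5"
  proof -
    assume P4
    then obtain \<N> :: "'a set set" where N: "countable \<N>" "cs_bullet_network_at \<N> 0"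
      unfolding P4_def by blast
    have "radial_network \<N>" unfolding radial_network_def
    proof (intro allI impI)
      fix U x assume U: "nhd (0::'a) U"
      obtain N n where "N \<in> \<N>" "N \<subseteq> U" "inverse (real (Suc n)) *\<^sub>R x \<in> N"
        using N(2) U scale_seq[OF cont, of x] unfolding cs_bullet_network_at_def by blast
      then show "\<exists>N\<in>\<N>. \<exists>\<epsilon>::real. \<epsilon> \<noteq> 0 \<and> \<epsilon> *\<^sub>R x \<in> N \<and> N \<subseteq> U"
        by (intro bexI[of _ N] exI[of _ "inverse (real (Suc n))"]) auto
    qed
    then show P5 unfolding P5_def using N(1) by blast
  qed
  show "P5 \<Longrightarrow> P6"
  proof -
    assume P5
    then obtain \<N> :: "'a set set" where N: "countable \<N>" "radial_network \<N>"
      unfolding P5_def by blast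
    show P6 unfolding P6_def using radial_bounded[OF lcs N] by blast
  qed
  show "P7" if H: "\<exists>B::'a set. independent B \<and> span B = UNIV \<and> uncountable B" and "P6"
  proof -
    obtain H :: "'a set" where H: "independent H" "uncountable H" using H by blast
    have "\<exists>B\<subseteq>H. infinite B \<and> tvs_bounded B" using \<open>P6\<close>[unfolded P6_def, rule_format, OF H(2)] .
    then obtain B where B: "B \<subseteq> H" "infinite B" "tvs_bounded B" by blast
    obtain b :: "nat \<Rightarrow> 'a" where b: "inj b" "range b \<subseteq> B" using infinite_countable_subset[OF B(2)] by blast
    define c where "c i = inverse (real (Suc i)) *\<^sub>R b i" for i
    have "c \<longlonglongrightarrow> 0"
    proof (rule topological_tendstoI)
      fix S :: "'a set" assume S: "open S" "0 \<in> S"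
      obtain W where W: "nhd 0 W" "W \<subseteq> S" "balanced W" using balanced_nhd[OF lcs open_nhd[OF S]] by blast
      obtain n :: nat where n: "B \<subseteq> (\<lambda>y. real n *\<^sub>R y) ` W" using B(3) W(1) unfolding tvs_bounded_def by blast
      have "n \<noteq> 0"
      proof
        assume "n = 0"
        then have "B \<subseteq> {0}" using n by auto
        then show False using B(2) finite_subset by blast
      qed
      have "c i \<in> S" if "i \<ge> n" for i
      proof -
        have "b i \<in> B" using b(2) by (rule subsetD) simp
        then have "b i \<in> (\<lambda>y. real n *\<^sub>R y) ` W" using n by (rule subsetD[rotated])
        then obtain w where w: "w \<in> W" "b i = real n *\<^sub>R w" by (rule imageE) simp
        have "\<bar>real n / real (Suc i)\<bar> \<le> 1" using that by simp
        then have "(real n / real (Suc i)) *\<^sub>R w \<in> W" using W(3) w(1) unfolding balanced_def by blast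
        moreover have "c i = (real n / real (Suc i)) *\<^sub>R w" unfolding c_def w(2) by (simp add: field_simps)
        ultimately show ?thesis using W(2) by auto
      qed
      then show "eventually (\<lambda>i. c i \<in> S) sequentially" unfolding eventually_sequentially by blast
    qed
    then have "compactin euclidean (insert 0 (range c))"
      by (intro compactin_sequence_with_limit) auto
    then have cK: "compact (insert 0 (range c))" by simp
    have "\<not> (\<exists>F. finite F \<and> insert 0 (range c) \<subseteq> span F)"
    proof
      assume "\<exists>F. finite F \<and> insert 0 (range c) \<subseteq> span F"
      then obtain F where F: "finite F" "range c \<subseteq> span F" by blast
      have "range b \<subseteq> span F"
      proof
        fix y assume "y \<in> range b"
        then obtain i where i: "y = b i" by blast
        have "b i = real (Suc i) *\<^sub>R c i" by (simp add: c_def)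
        moreover have "c i \<in> span F" using F(2) by auto
        ultimately show "y \<in> span F" using i by (simp add: real_vector.span_scale)
      qed
      moreover have "range b \<subseteq> H" using B(1) b(2) by (rule subset_trans[rotated])
      then have "independent (range b)" by (rule real_vector.independent_mono[OF H(1)])
      ultimately have "finite (range b)" using real_vector.independent_span_bound[OF F(1)] by blast
      then show False using b(1) by (simp add: range_inj_infinite)
    qed
    then show P7 unfolding P7_def using cK by blast
  qed
qed

end
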